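(* Let $p=p(x,y)$ be a germ at the origin of an analytic function with $p(0,0)\neq 0$, and let $C,D$ be constants different from $0$ and $1$. Let $W_C$ (resp. $W_D$) be the planar 4-web whose foliations are the kernels of $dx$, $dy$, $dy-p\,dx$, $dy-C\,p\,dx$ (resp. $dx$, $dy$, $dy-p\,dx$, $dy-D\,p\,dx$). Then there is a (linear) bijection between the space of abelian relations of $W_C$ and that of $W_D$; in particular $W_C$ and $W_D$ have the same rank. *)

theory Defs
  imports "HOL-Analysis.Analysis"
begin

definition germ_analytic :: "(complex \<times> complex \<Rightarrow> complex) \<Rightarrow> bool" where
  "germ_analytic f \<longleftrightarrow> (\<exists>c::nat \<Rightarrow> nat \<Rightarrow> complex. \<exists>r>0. \<forall>x y. norm x < r \<and> norm y < r \<longrightarrow>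
      ((\<lambda>(m,n). c m n * x ^ m * y ^ n) has_sum f (x, y)) UNIV)"

definition pdx :: "(complex \<times> complex \<Rightarrow> complex) \<Rightarrow> complex \<times> complex \<Rightarrow> complex" where
  "pdx f z = deriv (\<lambda>x. f (x, snd z)) (fst z)"

definition pdy :: "(complex \<times> complex \<Rightarrow> complex) \<Rightarrow> complex \<times> complex \<Rightarrow> complex" where
  "pdy f z = deriv (\<lambda>y. f (fst z, y)) (snd z)"

(* Abelian relations (normalised by F_i(0)=0, i.e. modulo constants) of the 4-web
   with foliations ker dx, ker dy, ker (dy - p dx), ker (dy - K p dx).
   F i (i<4) is a first integral of the i-th foliation, i.e. dF_i \<and> \<omega>_i = 0:
     ker dx : F_y = 0;  ker dy : F_x = 0;  ker (dy - q dx) : F_x + q F_y = 0;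
   and F_0 + F_1 + F_2 + F_3 = 0 (as germs). *)
definition abel_rel ::
  "(complex \<times> complex \<Rightarrow> complex) \<Rightarrow> complex \<Rightarrow> (nat \<Rightarrow> complex \<times> complex \<Rightarrow> complex) \<Rightarrow> bool" where
  "abel_rel p K F \<longleftrightarrow>
     (\<forall>i<4. germ_analytic (F i) \<and> F i (0,0) = 0) \<and>
     (\<forall>\<^sub>F z in nhds (0,0).
        F 0 z + F 1 z + F 2 z + F 3 z = 0 \<and>
        pdy (F 0) z = 0 \<and>
        pdx (F 1) z = 0 \<and>
        pdx (F 2) z + p z * pdy (F 2) z = 0 \<and>
        pdx (F 3) z + K * p z * pdy (F 3) z = 0)"

definition germ_eq :: "(nat \<Rightarrow> complex \<times> complex \<Rightarrow> complex) \<Rightarrow> (nat \<Rightarrow> complex \<times> complex \<Rightarrow> complex) \<Rightarrow> bool" where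
  "germ_eq F G \<longleftrightarrow> (\<forall>i<4. \<forall>\<^sub>F z in nhds (0,0). F i z = G i z)"

definition ar_linear_bij ::
  "(complex \<times> complex \<Rightarrow> complex) \<Rightarrow> complex \<Rightarrow> complex \<Rightarrow>
   ((nat \<Rightarrow> complex \<times> complex \<Rightarrow> complex) \<Rightarrow> (nat \<Rightarrow> complex \<times> complex \<Rightarrow> complex)) \<Rightarrow> bool" where
  "ar_linear_bij p K1 K2 \<Phi> \<longleftrightarrow>
     (\<forall>F. abel_rel p K1 F \<longrightarrow> abel_rel p K2 (\<Phi> F)) \<and>
     (\<forall>F G. abel_rel p K1 F \<and> abel_rel p K1 G \<and> germ_eq F G \<longrightarrow> germ_eq (\<Phi> F) (\<Phi> G)) \<and>
     (\<forall>F G a b. abel_rel p K1 F \<and> abel_rel p K1 G \<longrightarrow>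
        germ_eq (\<Phi> (\<lambda>i z. a * F i z + b * G i z)) (\<lambda>i z. a * \<Phi> F i z + b * \<Phi> G i z)) \<and>
     (\<forall>F G. abel_rel p K1 F \<and> abel_rel p K1 G \<and> germ_eq (\<Phi> F) (\<Phi> G) \<longrightarrow> germ_eq F G) \<and>
     (\<forall>H. abel_rel p K2 H \<longrightarrow> (\<exists>F. abel_rel p K1 F \<and> germ_eq (\<Phi> F) H))"

end

theory Submission imports Defs begin

lemma diff_x:
  fixes c :: "nat \<Rightarrow> nat \<Rightarrow> complex" and g :: "complex \<times> complex \<Rightarrow> complex"
  assumes hs: "\<forall>x y. norm x < r \<and> norm y < r \<longrightarrow> ((\<lambda>(m,n). c m n * x^m * y^n) has_sum g (x,y)) UNIV"
    and y: "norm y < r" and x0: "norm x0 < r"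
  shows "(\<lambda>x. g (x,y)) field_differentiable at x0"
proof -
  have r: "r > 0" using y norm_ge_zero[of y] by linarith
  define x1 :: complex where "x1 = of_real (r/2)"
  have x1: "norm x1 < r" "x1 \<noteq> 0" using r by (auto simp: x1_def)
  have "(\<lambda>(m,n). c m n * x1^m * y^n) summable_on UNIV"
    using hs x1 y by (auto simp: summable_on_def)
  hence "(\<lambda>(m,n). c m n * x1^m * y^n) summable_on Sigma UNIV (\<lambda>_. UNIV)" by simp
  hence row1: "(\<lambda>n. c m n * x1^m * y^n) summable_on UNIV" for m
    using summable_on_SigmaD1[of "\<lambda>m n. c m n * x1^m * y^n" UNIV "\<lambda>_. UNIV" m] by simp
  have rowc: "(\<lambda>n. c m n * y^n) summable_on UNIV" for m
  proof -
    have "(\<lambda>n. (c m n * x1^m * y^n) * inverse (x1^m)) summable_on UNIV"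
      using row1[of m] by (rule summable_on_cmult_left)
    moreover have "(\<lambda>n. (c m n * x1^m * y^n) * inverse (x1^m)) = (\<lambda>n. c m n * y^n)"
      using x1 by (auto simp: field_simps)
    ultimately show ?thesis by simp
  qed
  define a where "a m = infsum (\<lambda>n. c m n * y^n) UNIV" for m
  have ser: "(\<lambda>m. a m * x^m) sums g (x,y)" if "norm x < r" for x
  proof -
    have "((\<lambda>(m,n). c m n * x^m * y^n) has_sum g (x,y)) (Sigma UNIV (\<lambda>_. UNIV))"
      using hs that y by simp
    moreover have "((\<lambda>n. (\<lambda>(m,n). c m n * x^m * y^n) (m, n)) has_sum a m * x^m) UNIV" for m
    proof -
      have "((\<lambda>n. c m n * y^n) has_sum a m) UNIV" using rowc[of m] by (simp add: a_def)
      hence "((\<lambda>n. c m n * y^n * x^m) has_sum a m * x^m) UNIV" by (rule has_sum_cmult_left)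
      thus ?thesis by (simp add: mult_ac)
    qed
    ultimately have "((\<lambda>m. a m * x^m) has_sum g (x,y)) UNIV"
      by (rule has_sum_SigmaD)
    thus ?thesis by (rule has_sum_imp_sums)
  qed
  have "((\<lambda>z. \<Sum>n. a n * z^n) has_field_derivative (\<Sum>n. diffs a n * x0^n)) (at x0)"
    by (rule termdiffs_strong'[where K=r]) (use ser x0 in \<open>auto simp: sums_iff\<close>)
  hence "((\<lambda>x. g (x,y)) has_field_derivative (\<Sum>n. diffs a n * x0^n)) (at x0)"
    by (rule has_field_derivative_transform_within_open[where S="ball 0 r"])
       (use x0 ser in \<open>auto simp: sums_iff\<close>)
  thus ?thesis by (auto simp: field_differentiable_def)
qed

lemma germ_diff:
  assumes "germ_analytic f"
  shows "\<forall>\<^sub>F z in nhds (0,0). (\<lambda>x. f (x, snd z)) field_differentiable at (fst z) \<and>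
           (\<lambda>y. f (fst z, y)) field_differentiable at (snd z)"
proof -
  obtain c r where r: "r > 0" and hs: "\<forall>x y. norm x < r \<and> norm y < r \<longrightarrow>
      ((\<lambda>(m,n). c m n * x ^ m * y ^ n) has_sum f (x, y)) UNIV"
    using assms unfolding germ_analytic_def by blast
  have hs': "\<forall>y x. norm y < r \<and> norm x < r \<longrightarrow>
      ((\<lambda>(n,m). (\<lambda>n m. c m n) n m * y ^ n * x ^ m) has_sum (\<lambda>(y,x). f (x,y)) (y, x)) UNIV"
  proof (intro allI impI)
    fix y x :: complex assume "norm y < r \<and> norm x < r"
    hence "((\<lambda>(m,n). c m n * x ^ m * y ^ n) has_sum f (x, y)) (UNIV \<times> UNIV)" using hs by simp
    hence "((\<lambda>(n,m). (\<lambda>(m,n). c m n * x ^ m * y ^ n) (m,n)) has_sum f (x, y)) (UNIV \<times> UNIV)"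
      by (subst (asm) has_sum_swap) simp
    thus "((\<lambda>(n,m). (\<lambda>n m. c m n) n m * y ^ n * x ^ m) has_sum (\<lambda>(y,x). f (x,y)) (y, x)) UNIV"
      by (simp add: case_prod_unfold mult_ac)
  qed
  have ev: "eventually (\<lambda>z. z \<in> ball ((0::complex),(0::complex)) r) (nhds (0,0))"
    using r by (intro eventually_nhds_in_open) auto
  moreover have "(\<lambda>x. f (x, snd z)) field_differentiable at (fst z) \<and>
           (\<lambda>y. f (fst z, y)) field_differentiable at (snd z)" if "z \<in> ball (0,0) r" for z
  proof -
    have nz: "norm z < r" using that by (simp add: dist_norm norm_minus_commute zero_prod_def[symmetric])
    have n: "norm (fst z) < r" "norm (snd z) < r"
      using nz by (metis norm_fst_le norm_snd_le prod.collapse le_less_trans)+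
    show ?thesis
      using diff_x[OF hs n(2) n(1)] diff_x[OF hs' n(1) n(2)] by simp
  qed
  ultimately show ?thesis by (auto intro: eventually_mono)
qed

lemma germ_lin:
  assumes "germ_analytic f" "germ_analytic g"
  shows "germ_analytic (\<lambda>z. a * f z + b * g z)"
proof -
  obtain c r where r: "r > 0" and hs: "\<forall>x y. norm x < r \<and> norm y < r \<longrightarrow>
      ((\<lambda>(m,n). c m n * x ^ m * y ^ n) has_sum f (x, y)) UNIV"
    using assms(1) unfolding germ_analytic_def by blast
  obtain d s where s: "s > 0" and hs2: "\<forall>x y. norm x < s \<and> norm y < s \<longrightarrow>
      ((\<lambda>(m,n). d m n * x ^ m * y ^ n) has_sum g (x, y)) UNIV"
    using assms(2) unfolding germ_analytic_def by blast
  have "\<forall>x y. norm x < min r s \<and> norm y < min r s \<longrightarrow>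
      ((\<lambda>(m,n). (a * c m n + b * d m n) * x ^ m * y ^ n) has_sum (a * f (x,y) + b * g (x, y))) UNIV"
  proof (intro allI impI)
    fix x y :: complex assume h: "norm x < min r s \<and> norm y < min r s"
    have "((\<lambda>mn. a * (\<lambda>(m,n). c m n * x ^ m * y ^ n) mn + b * (\<lambda>(m,n). d m n * x ^ m * y ^ n) mn)
       has_sum (a * f (x,y) + b * g (x, y))) UNIV"
      using h hs hs2 by (intro has_sum_add has_sum_cmult_right) auto
    thus "((\<lambda>(m,n). (a * c m n + b * d m n) * x ^ m * y ^ n) has_sum (a * f (x,y) + b * g (x, y))) UNIV"
      by (simp add: case_prod_unfold algebra_simps)
  qed
  thus ?thesis unfolding germ_analytic_def using r s
    by (intro exI[of _ "\<lambda>m n. a * c m n + b * d m n"] exI[of _ "min r s"]) auto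
qed

definition Phi :: "complex \<Rightarrow> complex \<Rightarrow> (nat \<Rightarrow> complex \<times> complex \<Rightarrow> complex) \<Rightarrow> (nat \<Rightarrow> complex \<times> complex \<Rightarrow> complex)" where
  "Phi K1 K2 F = (\<lambda>i z. if i = 0 then F 0 z else if i = 1 then (K1/K2) * F 1 z
     else if i = 2 then ((K1-1)/(K2-1)) * F 2 z
     else - F 0 z - (K1/K2) * F 1 z - ((K1-1)/(K2-1)) * F 2 z)"

lemma ev_slice_x:
  assumes "eventually Q (nhds (x::complex, y::complex))"
  shows "eventually (\<lambda>x'. Q (x', y)) (nhds x)"
proof -
  have "((\<lambda>x'. (x', y)) \<longlongrightarrow> (x, y)) (nhds x)"
    by (intro tendsto_intros) (simp_all add: tendsto_ident_at filterlim_ident)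
  thus ?thesis using assms by (auto simp: filterlim_iff)
qed

lemma ev_slice_y:
  assumes "eventually Q (nhds (x::complex, y::complex))"
  shows "eventually (\<lambda>y'. Q (x, y')) (nhds y)"
proof -
  have "((\<lambda>y'. (x, y')) \<longlongrightarrow> (x, y)) (nhds y)"
    by (intro tendsto_intros) (simp_all add: filterlim_ident)
  thus ?thesis using assms by (auto simp: filterlim_iff)
qed

lemma point:
  fixes F :: "nat \<Rightarrow> complex \<times> complex \<Rightarrow> complex"
  assumes evP: "eventually (\<lambda>w. F 0 w + F 1 w + F 2 w + F 3 w = 0) (nhds (x,y))"
    and dfx: "\<And>i. i < 4 \<Longrightarrow> (\<lambda>x'. F i (x', y)) field_differentiable at x"
    and dfy: "\<And>i. i < 4 \<Longrightarrow> (\<lambda>y'. F i (x, y')) field_differentiable at y"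
    and e0: "pdy (F 0) (x,y) = 0" and d1: "pdx (F 1) (x,y) = 0"
    and r2: "pdx (F 2) (x,y) + p (x,y) * pdy (F 2) (x,y) = 0"
    and r3: "pdx (F 3) (x,y) + K1 * p (x,y) * pdy (F 3) (x,y) = 0"
    and K2: "K2 \<noteq> 0" "K2 \<noteq> 1"
  shows "pdy (Phi K1 K2 F 0) (x,y) = 0 \<and>
        pdx (Phi K1 K2 F 1) (x,y) = 0 \<and>
        pdx (Phi K1 K2 F 2) (x,y) + p (x,y) * pdy (Phi K1 K2 F 2) (x,y) = 0 \<and>
        pdx (Phi K1 K2 F 3) (x,y) + K2 * p (x,y) * pdy (Phi K1 K2 F 3) (x,y) = 0"
proof -
  define d where "d i = pdx (F i) (x,y)" for i
  define e where "e i = pdy (F i) (x,y)" for i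
  have Dx: "((\<lambda>x'. F i (x', y)) has_field_derivative d i) (at x)" if "i < 4" for i
    using dfx[OF that] by (simp add: d_def pdx_def DERIV_deriv_iff_field_differentiable)
  have Dy: "((\<lambda>y'. F i (x, y')) has_field_derivative e i) (at y)" if "i < 4" for i
    using dfy[OF that] by (simp add: e_def pdy_def DERIV_deriv_iff_field_differentiable)
  have sx: "d 0 + d 1 + d 2 + d 3 = 0"
  proof -
    have "((\<lambda>x'. F 0 (x', y) + F 1 (x', y) + F 2 (x', y) + F 3 (x', y)) has_field_derivative
        d 0 + d 1 + d 2 + d 3) (at x)"
      by (intro DERIV_add Dx) auto
    moreover have "((\<lambda>x'. F 0 (x', y) + F 1 (x', y) + F 2 (x', y) + F 3 (x', y)) has_field_derivative 0) (at x)"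
      by (subst DERIV_cong_ev[OF refl ev_slice_x[OF evP] refl]) (rule DERIV_const)
    ultimately show ?thesis by (rule DERIV_unique)
  qed
  have sy: "e 0 + e 1 + e 2 + e 3 = 0"
  proof -
    have "((\<lambda>y'. F 0 (x, y') + F 1 (x, y') + F 2 (x, y') + F 3 (x, y')) has_field_derivative
        e 0 + e 1 + e 2 + e 3) (at y)"
      by (intro DERIV_add Dy) auto
    moreover have "((\<lambda>y'. F 0 (x, y') + F 1 (x, y') + F 2 (x, y') + F 3 (x, y')) has_field_derivative 0) (at y)"
      by (subst DERIV_cong_ev[OF refl ev_slice_y[OF evP] refl]) (rule DERIV_const)
    ultimately show ?thesis by (rule DERIV_unique)
  qed
  define l where "l = K1/K2"
  define m where "m = (K1-1)/(K2-1)"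
  have P0: "Phi K1 K2 F 0 = F 0" by (simp add: Phi_def)
  have P1: "Phi K1 K2 F 1 = (\<lambda>z. l * F 1 z)" by (simp add: Phi_def l_def)
  have P2: "Phi K1 K2 F 2 = (\<lambda>z. m * F 2 z)" by (simp add: Phi_def m_def)
  have P3: "Phi K1 K2 F 3 = (\<lambda>z. - F 0 z - l * F 1 z - m * F 2 z)" by (simp add: Phi_def l_def m_def)
  have a1: "pdx (Phi K1 K2 F 1) (x,y) = l * d 1"
    unfolding P1 pdx_def by (simp, intro DERIV_imp_deriv DERIV_cmult Dx[of 1, simplified]) 
  have a2x: "pdx (Phi K1 K2 F 2) (x,y) = m * d 2"
    unfolding P2 pdx_def by (simp, intro DERIV_imp_deriv DERIV_cmult Dx[of 2, simplified]) 
  have a2y: "pdy (Phi K1 K2 F 2) (x,y) = m * e 2"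
    unfolding P2 pdy_def by (simp, intro DERIV_imp_deriv DERIV_cmult Dy[of 2, simplified]) 
  have a3x: "pdx (Phi K1 K2 F 3) (x,y) = - d 0 - l * d 1 - m * d 2"
    unfolding P3 pdx_def by (simp, intro DERIV_imp_deriv DERIV_diff DERIV_minus DERIV_cmult Dx) simp_all
  have a3y: "pdy (Phi K1 K2 F 3) (x,y) = - e 0 - l * e 1 - m * e 2"
    unfolding P3 pdy_def by (simp, intro DERIV_imp_deriv DERIV_diff DERIV_minus DERIV_cmult Dy) simp_all
  have e0': "e 0 = 0" using e0 by (simp add: e_def)
  have d1': "d 1 = 0" using d1 by (simp add: d_def)
  have r2': "d 2 = - p (x,y) * e 2" using r2 by (simp add: d_def e_def add_eq_0_iff)
  have r3': "d 3 = - K1 * p (x,y) * e 3" using r3 by (simp add: d_def e_def add_eq_0_iff)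
  have lK: "l * K2 = K1" using K2 by (simp add: l_def)
  have mK: "m * (K2 - 1) = K1 - 1" using K2 by (simp add: m_def)
  have fin: "- d 0 - l * d 1 - m * d 2 + K2 * p (x,y) * (- e 0 - l * e 1 - m * e 2) = 0"
  proof -
    have d0: "d 0 = - d 2 - d 3" using sx d1' by (simp add: algebra_simps eq_neg_iff_add_eq_0)
    have e3: "e 3 = - e 1 - e 2" using sy e0' by (simp add: algebra_simps eq_neg_iff_add_eq_0)
    have "- d 0 - l * d 1 - m * d 2 + K2 * p (x,y) * (- e 0 - l * e 1 - m * e 2)
       = - p (x,y) * e 2 + K1 * p (x,y) * (e 1 + e 2) - p(x,y) * e 2 * (m * (K2 - 1)) - p(x,y) * e 1 * (l * K2)"
      unfolding d0 e0' d1' r3' e3 r2' by (simp add: algebra_simps)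
    also have "\<dots> = 0" unfolding lK mK by (simp add: algebra_simps)
    finally show ?thesis .
  qed
  have c3: "pdx (Phi K1 K2 F 2) (x,y) + p (x,y) * pdy (Phi K1 K2 F 2) (x,y) = 0"
    unfolding a2x a2y r2' by (simp add: algebra_simps)
  show ?thesis
    using e0 a1 a3x a3y fin d1' c3 unfolding P0 by simp
qed

lemma phi_abel:
  assumes A: "abel_rel p K1 F" and K2: "K2 \<noteq> 0" "K2 \<noteq> 1"
  shows "abel_rel p K2 (Phi K1 K2 F)"
proof -
  have ga: "germ_analytic (F i)" and z0: "F i (0,0) = 0" if "i < 4" for i
    using A that unfolding abel_rel_def by auto
  have gaP: "germ_analytic (Phi K1 K2 F i)" if "i < 4" for i
  proof -
    have "i = 0 \<or> i = 1 \<or> i = 2 \<or> i = 3" using that by auto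
    moreover have "germ_analytic (\<lambda>z. 1 * F 0 z + 0 * F 0 z)" by (rule germ_lin) (use ga in auto)
    hence "germ_analytic (Phi K1 K2 F 0)" by (simp add: Phi_def)
    moreover have "germ_analytic (\<lambda>z. (K1/K2) * F 1 z + 0 * F 0 z)" by (rule germ_lin) (use ga in auto)
    hence "germ_analytic (Phi K1 K2 F 1)" by (simp add: Phi_def)
    moreover have "germ_analytic (\<lambda>z. ((K1-1)/(K2-1)) * F 2 z + 0 * F 0 z)" by (rule germ_lin) (use ga in auto)
    hence "germ_analytic (Phi K1 K2 F 2)" by (simp add: Phi_def)
    moreover have "germ_analytic (\<lambda>z. (-1) * F 0 z + 1 * ((- (K1/K2)) * F 1 z + (- ((K1-1)/(K2-1))) * F 2 z))"
      by (intro germ_lin) (use ga in auto)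
    moreover have "(\<lambda>z. (-1) * F 0 z + 1 * ((- (K1/K2)) * F 1 z + (- ((K1-1)/(K2-1))) * F 2 z)) = Phi K1 K2 F 3"
      unfolding Phi_def by (rule ext) simp
    ultimately show ?thesis by metis
  qed
  have ev: "\<forall>\<^sub>F z in nhds (0,0).
        F 0 z + F 1 z + F 2 z + F 3 z = 0 \<and>
        pdy (F 0) z = 0 \<and>
        pdx (F 1) z = 0 \<and>
        pdx (F 2) z + p z * pdy (F 2) z = 0 \<and>
        pdx (F 3) z + K1 * p z * pdy (F 3) z = 0"
    using A unfolding abel_rel_def by blast
  have ev2: "\<forall>\<^sub>F z in nhds (0,0). eventually (\<lambda>w. F 0 w + F 1 w + F 2 w + F 3 w = 0) (nhds z)"
  proof -
    have "\<forall>\<^sub>F z in nhds (0,0). F 0 z + F 1 z + F 2 z + F 3 z = 0"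
      by (rule eventually_mono[OF ev]) simp
    thus ?thesis by (simp only: eventually_eventually)
  qed
  have evd: "\<forall>\<^sub>F z in nhds (0,0). \<forall>i<4. (\<lambda>x. F i (x, snd z)) field_differentiable at (fst z) \<and>
           (\<lambda>y. F i (fst z, y)) field_differentiable at (snd z)"
  proof -
    have g: "\<forall>\<^sub>F z in nhds (0,0). (\<lambda>x. F i (x, snd z)) field_differentiable at (fst z) \<and>
           (\<lambda>y. F i (fst z, y)) field_differentiable at (snd z)" if "i < 4" for i
      by (rule germ_diff[OF ga[OF that]])
    show ?thesis
      using eventually_conj[OF g[of 0] eventually_conj[OF g[of 1] eventually_conj[OF g[of 2] g[of 3]]]]
    proof (rule eventually_mono)
      fix z assume h: "((\<lambda>x. F 0 (x, snd z)) field_differentiable at (fst z) \<and>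
           (\<lambda>y. F 0 (fst z, y)) field_differentiable at (snd z)) \<and>
          ((\<lambda>x. F 1 (x, snd z)) field_differentiable at (fst z) \<and>
           (\<lambda>y. F 1 (fst z, y)) field_differentiable at (snd z)) \<and>
          ((\<lambda>x. F 2 (x, snd z)) field_differentiable at (fst z) \<and>
           (\<lambda>y. F 2 (fst z, y)) field_differentiable at (snd z)) \<and>
          ((\<lambda>x. F 3 (x, snd z)) field_differentiable at (fst z) \<and>
           (\<lambda>y. F 3 (fst z, y)) field_differentiable at (snd z))"
      show "\<forall>i<4. (\<lambda>x. F i (x, snd z)) field_differentiable at (fst z) \<and>
           (\<lambda>y. F i (fst z, y)) field_differentiable at (snd z)"
      proof (intro allI impI)
        fix i :: nat assume "i < 4"
        hence "i = 0 \<or> i = 1 \<or> i = 2 \<or> i = 3" by auto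
        thus "(\<lambda>x. F i (x, snd z)) field_differentiable at (fst z) \<and>
           (\<lambda>y. F i (fst z, y)) field_differentiable at (snd z)" using h by (elim disjE) simp_all
      qed
    qed (simp_all)
  qed
  have "\<forall>\<^sub>F z in nhds (0,0).
        Phi K1 K2 F 0 z + Phi K1 K2 F 1 z + Phi K1 K2 F 2 z + Phi K1 K2 F 3 z = 0 \<and>
        pdy (Phi K1 K2 F 0) z = 0 \<and>
        pdx (Phi K1 K2 F 1) z = 0 \<and>
        pdx (Phi K1 K2 F 2) z + p z * pdy (Phi K1 K2 F 2) z = 0 \<and>
        pdx (Phi K1 K2 F 3) z + K2 * p z * pdy (Phi K1 K2 F 3) z = 0"
    using eventually_conj[OF ev eventually_conj[OF ev2 evd]]
  proof (rule eventually_mono)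
    fix z assume elim: "(F 0 z + F 1 z + F 2 z + F 3 z = 0 \<and>
        pdy (F 0) z = 0 \<and>
        pdx (F 1) z = 0 \<and>
        pdx (F 2) z + p z * pdy (F 2) z = 0 \<and>
        pdx (F 3) z + K1 * p z * pdy (F 3) z = 0) \<and>
        eventually (\<lambda>w. F 0 w + F 1 w + F 2 w + F 3 w = 0) (nhds z) \<and>
        (\<forall>i<4. (\<lambda>x. F i (x, snd z)) field_differentiable at (fst z) \<and>
           (\<lambda>y. F i (fst z, y)) field_differentiable at (snd z))"
    obtain x y where z: "z = (x,y)" by fastforce
    have "pdy (Phi K1 K2 F 0) (x,y) = 0 \<and>
        pdx (Phi K1 K2 F 1) (x,y) = 0 \<and>
        pdx (Phi K1 K2 F 2) (x,y) + p (x,y) * pdy (Phi K1 K2 F 2) (x,y) = 0 \<and>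
        pdx (Phi K1 K2 F 3) (x,y) + K2 * p (x,y) * pdy (Phi K1 K2 F 3) (x,y) = 0"
    proof (rule point)
      show "eventually (\<lambda>w. F 0 w + F 1 w + F 2 w + F 3 w = 0) (nhds (x,y))" using elim z by simp
      show "(\<lambda>x'. F i (x', y)) field_differentiable at x" if "i < 4" for i using elim z that by simp
      show "(\<lambda>y'. F i (x, y')) field_differentiable at y" if "i < 4" for i using elim z that by simp
      show "pdy (F 0) (x,y) = 0" "pdx (F 1) (x,y) = 0"
        "pdx (F 2) (x,y) + p (x,y) * pdy (F 2) (x,y) = 0"
        "pdx (F 3) (x,y) + K1 * p (x,y) * pdy (F 3) (x,y) = 0" using elim z by simp_all
    qed (use K2 in auto)
    moreover have "Phi K1 K2 F 0 z + Phi K1 K2 F 1 z + Phi K1 K2 F 2 z + Phi K1 K2 F 3 z = 0"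
      by (simp add: Phi_def)
    ultimately show "Phi K1 K2 F 0 z + Phi K1 K2 F 1 z + Phi K1 K2 F 2 z + Phi K1 K2 F 3 z = 0 \<and>
        pdy (Phi K1 K2 F 0) z = 0 \<and>
        pdx (Phi K1 K2 F 1) z = 0 \<and>
        pdx (Phi K1 K2 F 2) z + p z * pdy (Phi K1 K2 F 2) z = 0 \<and>
        pdx (Phi K1 K2 F 3) z + K2 * p z * pdy (Phi K1 K2 F 3) z = 0" by (simp add: z)
  qed
  note evfin = this
  have zP: "Phi K1 K2 F i (0,0) = 0" if "i < 4" for i
    using z0[of 0] z0[of 1] z0[of 2] by (simp add: Phi_def)
  show ?thesis unfolding abel_rel_def
    using gaP zP evfin by blast
qed

lemma abel_sum: "abel_rel p K F \<Longrightarrow> \<forall>\<^sub>F z in nhds (0,0). F 3 z = - F 0 z - F 1 z - F 2 z"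
  unfolding abel_rel_def by (auto elim!: eventually_mono simp: eq_neg_iff_add_eq_0 algebra_simps)

theorem mainTheorem2:
  fixes p :: "complex \<times> complex \<Rightarrow> complex" and C D :: complex
  assumes "germ_analytic p" and "p (0,0) \<noteq> 0"
    and "C \<noteq> 0" and "C \<noteq> 1" and "D \<noteq> 0" and "D \<noteq> 1"
  shows "\<exists>\<Phi>. ar_linear_bij p C D \<Phi>"
proof (intro exI[of _ "Phi C D"])
  have Cm: "C - 1 \<noteq> 0" "D - 1 \<noteq> 0" using assms by auto
  have ge: "germ_eq F G" if "\<forall>\<^sub>F z in nhds (0,0). F 0 z = G 0 z \<and> F 1 z = G 1 z \<and> F 2 z = G 2 z \<and> F 3 z = G 3 z" for F G
    unfolding germ_eq_def
  proof (intro allI impI)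
    fix i :: nat assume "i < 4"
    hence "i = 0 \<or> i = 1 \<or> i = 2 \<or> i = 3" by auto
    thus "\<forall>\<^sub>F z in nhds (0,0). F i z = G i z" using that by (auto elim: eventually_mono)
  qed
  have gd: "\<forall>\<^sub>F z in nhds (0,0). F 0 z = G 0 z \<and> F 1 z = G 1 z \<and> F 2 z = G 2 z \<and> F 3 z = G 3 z"
    if "germ_eq F G" for F G
    using that unfolding germ_eq_def
    by (intro eventually_conj) auto
  show "ar_linear_bij p C D (Phi C D)"
    unfolding ar_linear_bij_def
  proof (intro conjI allI impI)
    fix F assume "abel_rel p C F"
    thus "abel_rel p D (Phi C D F)" using phi_abel assms by blast
  next
    fix F G assume "abel_rel p C F \<and> abel_rel p C G \<and> germ_eq F G"
    hence "\<forall>\<^sub>F z in nhds (0,0). F 0 z = G 0 z \<and> F 1 z = G 1 z \<and> F 2 z = G 2 z \<and> F 3 z = G 3 z"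
      using gd by blast
    thus "germ_eq (Phi C D F) (Phi C D G)"
      by (intro ge) (auto elim!: eventually_mono simp: Phi_def)
  next
    fix F G a b
    show "germ_eq (Phi C D (\<lambda>i z. a * F i z + b * G i z)) (\<lambda>i z. a * Phi C D F i z + b * Phi C D G i z)"
      by (intro ge always_eventually allI) (simp add: Phi_def distrib_left right_diff_distrib mult.left_commute)
  next
    fix F G assume h: "abel_rel p C F \<and> abel_rel p C G \<and> germ_eq (Phi C D F) (Phi C D G)"
    have e1: "\<forall>\<^sub>F z in nhds (0,0). F 3 z = - F 0 z - F 1 z - F 2 z" using abel_sum h by blast
    have e2: "\<forall>\<^sub>F z in nhds (0,0). G 3 z = - G 0 z - G 1 z - G 2 z" using abel_sum h by blast
    have e3: "\<forall>\<^sub>F z in nhds (0,0). Phi C D F 0 z = Phi C D G 0 z \<and> Phi C D F 1 z = Phi C D G 1 z \<and>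
       Phi C D F 2 z = Phi C D G 2 z \<and> Phi C D F 3 z = Phi C D G 3 z" using gd h by blast
    have "\<forall>\<^sub>F z in nhds (0,0). F 0 z = G 0 z \<and> F 1 z = G 1 z \<and> F 2 z = G 2 z \<and> F 3 z = G 3 z"
      using e1 e2 e3
    proof eventually_elim
      case (elim z)
      have a0: "F 0 z = G 0 z" using elim by (simp add: Phi_def)
      have "C / D * F 1 z = C / D * G 1 z" using elim by (simp add: Phi_def)
      hence a1: "F 1 z = G 1 z" using assms by simp
      have "(C - 1) / (D - 1) * F 2 z = (C - 1) / (D - 1) * G 2 z" using elim by (simp add: Phi_def)
      hence a2: "F 2 z = G 2 z" using Cm by simp
      show ?case using a0 a1 a2 elim by simp
    qed
    thus "germ_eq F G" by (rule ge)
  next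
    fix H assume h: "abel_rel p D H"
    show "\<exists>F. abel_rel p C F \<and> germ_eq (Phi C D F) H"
    proof (intro exI conjI)
      show "abel_rel p C (Phi D C H)" using phi_abel h assms by blast
      show "germ_eq (Phi C D (Phi D C H)) H"
        using abel_sum[OF h]
      proof (intro ge, eventually_elim)
        case (elim z)
        have b1: "C / D * (D / C * H 1 z) = H 1 z" using assms by simp
        have b2: "(C - 1) / (D - 1) * ((D - 1) / (C - 1) * H 2 z) = H 2 z" using Cm by simp
        show ?case unfolding Phi_def using b1 b2 elim by simp
      qed
    qed
  qed
qed

end
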